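(* Let $\Lambda=\langle a_1\rangle\perp\cdots\perp\langle a_n\rangle=\mathcal{O}_Ds_1\perp\cdots\perp\mathcal{O}_Ds_n$ be a skew-hermitian lattice with $\nu(a_1)\le\cdots\le\nu(a_n)$, and assume $\mu(\Lambda)>\nu(4)$ and $N(a_2),\dots,N(a_n)\in N(a_1)k^{*2}$. Let $(s;\sigma)\in\mathcal{B}(\Lambda)$, i.e. $s=(1-r)s_m-s_0$ with $s_0=\lambda_{m+1}s_{m+1}+\cdots+\lambda_ns_n$ ($\lambda_l\in\mathcal{O}_D$), $\sigma=a_m(1-\bar r)$ and $|1-\bar r|\ge|2|$. If for some $t\in\{1,\dots,n-m\}$ we have $|\lambda_{m+t}|\ge|\lambda_{m+t+l}|$ for all $l\in\{1,\dots,n-m-t\}$, then there exists a lattice $\Lambda'=\langle b_1\rangle\perp\cdots\perp\langle b_{t+1}\rangle\subseteq\Lambda$ such that: (1) $(s;\sigma)\in\mathcal{U}^+_k(\Lambda')$; (2) $\mu(\Lambda')\ge\mu(\Lambda)$; (3) $N(b_i)\in N(a_1)k^{*2}$ for all $i=1,\dots,t+1$.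
   Context: $k$ is a dyadic local field of characteristic $0$ (finite extension of $\mathbb{Q}_2$), $\nu_k$ its normalized valuation, $|\cdot|_k$ its absolute value. $D$ is the quaternion division algebra over $k$ with canonical involution $q\mapsto\bar q$ and reduced norm $N$; $|q|:=|N(q)|_k$, $\nu(q):=\nu_k(N(q))$; $\mathcal{O}_D=\{q:|q|\le1\}$. A skew-hermitian space is a free $D$-module $V$ of finite rank with nondegenerate $h:V\times V\to D$, $D$-linear in the first variable, $h(x,y)=-\overline{h(y,x)}$. For pure quaternions $a_i$, $\langle a_1\rangle\perp\cdots\perp\langle a_n\rangle=\mathcal{O}_Ds_1\perp\cdots\perp\mathcal{O}_Ds_n$ means an orthogonal sum with $h(s_i,s_i)=a_i$; for such a lattice with $\nu(a_1)\le\cdots\le\nu(a_n)$, $\mu(\Lambda)=\min_i(\nu(a_{i+1})-\nu(a_i))$. For $s\in V$, $\sigma\in D^*$ with $\sigma-\bar\sigma=h(s,s)$, the simple rotation is $(s;\sigma)(x)=x-h(x,s)\sigma^{-1}s$; it is an isometry. $\mathcal{U}^+_k(\Lambda)$ is the group of isometries of $h$ with $\phi(\Lambda)=\Lambda$. $\mathcal{B}(\Lambda)$ is the set of simple rotations $(s;\sigma)\in\mathcal{U}^+_k(\Lambda)$ for which there exist $m\in\{1,\dots,n\}$, $r\in\mathcal{O}_D$ with $|1-r|\ge|2|$ and $\lambda_{m+1},\dots,\lambda_n\in\mathcal{O}_D$ with $s=(1-r)s_m-\sum_{l>m}\lambda_ls_l$ and $\sigma=a_m(1-\bar r)$. *)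

theory Defs
  imports Complex_Main "HOL-Library.Product_Plus" "HOL-Library.Function_Algebras"
begin

text \<open>k is a type of class field_char_0 equipped with a normalized discrete valuation
  v (values on nonzero elements; v 0 is irrelevant and never used).
  A finite extension of Q_2 is exactly a field of characteristic 0 that is complete for a
  normalized discrete valuation with finite residue field of characteristic 2.\<close>

definition val_ring :: "('k::field \<Rightarrow> int) \<Rightarrow> 'k set" where
  "val_ring v = {x. x = 0 \<or> 0 \<le> v x}"

definition residue_classes :: "('k::field \<Rightarrow> int) \<Rightarrow> 'k set set" where
  "residue_classes v =
     (\<lambda>x. {y \<in> val_ring v. x - y = 0 \<or> 1 \<le> v (x - y)}) ` val_ring v"

definition residue_card :: "('k::field \<Rightarrow> int) \<Rightarrow> nat" where
  "residue_card v = card (residue_classes v)"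

definition dyadic_local_field :: "('k::field_char_0 \<Rightarrow> int) \<Rightarrow> bool" where
  "dyadic_local_field v \<longleftrightarrow>
     (\<forall>x y. x \<noteq> 0 \<longrightarrow> y \<noteq> 0 \<longrightarrow> v (x * y) = v x + v y) \<and>
     (\<forall>x y. x \<noteq> 0 \<longrightarrow> y \<noteq> 0 \<longrightarrow> x + y \<noteq> 0 \<longrightarrow> min (v x) (v y) \<le> v (x + y)) \<and>
     (\<exists>\<pi>. \<pi> \<noteq> 0 \<and> v \<pi> = 1) \<and>
     0 < v 2 \<and>
     finite (residue_classes v) \<and>
     (\<forall>X :: nat \<Rightarrow> 'k.
        (\<forall>M. \<exists>N. \<forall>i\<ge>N. \<forall>j\<ge>N. X i = X j \<or> M \<le> v (X i - X j)) \<longrightarrow>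
        (\<exists>L. \<forall>M. \<exists>N. \<forall>i\<ge>N. X i = L \<or> M \<le> v (X i - L)))"

definition absk :: "('k::field \<Rightarrow> int) \<Rightarrow> 'k \<Rightarrow> real" where
  "absk v x = (if x = 0 then 0 else real (residue_card v) powi (- v x))"

text \<open>Elements (x0,x1,x2,x3) stand for x0 + x1 i + x2 j + x3 ij with i^2 = alpha,
  j^2 = beta, ij = - ji.  Addition is the componentwise one (Product_Plus).\<close>

type_synonym 'k quat = "'k \<times> 'k \<times> 'k \<times> 'k"

definition qk :: "'k::field \<Rightarrow> 'k quat" where
  "qk c = (c, 0, 0, 0)"

definition qmul :: "'k::field \<Rightarrow> 'k \<Rightarrow> 'k quat \<Rightarrow> 'k quat \<Rightarrow> 'k quat" where
  "qmul \<alpha> \<beta> p q = (case p of (a0, a1, a2, a3) \<Rightarrow> case q of (b0, b1, b2, b3) \<Rightarrow>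
     (a0*b0 + \<alpha>*a1*b1 + \<beta>*a2*b2 - \<alpha>*\<beta>*a3*b3,
      a0*b1 + a1*b0 - \<beta>*a2*b3 + \<beta>*a3*b2,
      a0*b2 + a2*b0 + \<alpha>*a1*b3 - \<alpha>*a3*b1,
      a0*b3 + a3*b0 + a1*b2 - a2*b1))"

definition qconj :: "'k::field quat \<Rightarrow> 'k quat" where
  "qconj q = (case q of (a0, a1, a2, a3) \<Rightarrow> (a0, - a1, - a2, - a3))"

definition qnorm :: "'k::field \<Rightarrow> 'k \<Rightarrow> 'k quat \<Rightarrow> 'k" where
  "qnorm \<alpha> \<beta> q = (case q of (a0, a1, a2, a3) \<Rightarrow>
     a0^2 - \<alpha>*a1^2 - \<beta>*a2^2 + \<alpha>*\<beta>*a3^2)"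

definition qinv :: "'k::field \<Rightarrow> 'k \<Rightarrow> 'k quat \<Rightarrow> 'k quat" where
  "qinv \<alpha> \<beta> q = qmul \<alpha> \<beta> (qk (inverse (qnorm \<alpha> \<beta> q))) (qconj q)"

definition pure_quat :: "'k::field quat \<Rightarrow> bool" where
  "pure_quat q \<longleftrightarrow> fst q = 0"

definition quat_division :: "'k::field \<Rightarrow> 'k \<Rightarrow> bool" where
  "quat_division \<alpha> \<beta> \<longleftrightarrow> \<alpha> \<noteq> 0 \<and> \<beta> \<noteq> 0 \<and> (\<forall>q. qnorm \<alpha> \<beta> q = 0 \<longrightarrow> q = 0)"

definition vD :: "'k::field \<Rightarrow> 'k \<Rightarrow> ('k \<Rightarrow> int) \<Rightarrow> 'k quat \<Rightarrow> int" where
  "vD \<alpha> \<beta> v q = v (qnorm \<alpha> \<beta> q)"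

definition absD :: "'k::field \<Rightarrow> 'k \<Rightarrow> ('k \<Rightarrow> int) \<Rightarrow> 'k quat \<Rightarrow> real" where
  "absD \<alpha> \<beta> v q = absk v (qnorm \<alpha> \<beta> q)"

definition OD :: "'k::field \<Rightarrow> 'k \<Rightarrow> ('k \<Rightarrow> int) \<Rightarrow> 'k quat set" where
  "OD \<alpha> \<beta> v = {q. absD \<alpha> \<beta> v q \<le> 1}"

text \<open>Vectors are functions nat \<Rightarrow> D supported on {1..n}; D acts on the left.
  s_i is the i-th unit vector, and h(x,y) = \<Sum> x_i a_i conj(y_i), so h(s_i,s_i) = a_i.\<close>

definition Vsp :: "nat \<Rightarrow> (nat \<Rightarrow> 'k::field quat) set" where
  "Vsp n = {x. \<forall>i. i \<notin> {1..n} \<longrightarrow> x i = 0}"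

definition unitv :: "nat \<Rightarrow> nat \<Rightarrow> 'k::field quat" where
  "unitv i = (\<lambda>j. if j = i then qk 1 else 0)"

definition vsmul :: "'k::field \<Rightarrow> 'k \<Rightarrow> 'k quat \<Rightarrow> (nat \<Rightarrow> 'k quat) \<Rightarrow> (nat \<Rightarrow> 'k quat)" where
  "vsmul \<alpha> \<beta> d x = (\<lambda>i. qmul \<alpha> \<beta> d (x i))"

definition hf :: "'k::field \<Rightarrow> 'k \<Rightarrow> nat \<Rightarrow> (nat \<Rightarrow> 'k quat) \<Rightarrow>
                  (nat \<Rightarrow> 'k quat) \<Rightarrow> (nat \<Rightarrow> 'k quat) \<Rightarrow> 'k quat" where
  "hf \<alpha> \<beta> n a x y = (\<Sum>i\<in>{1..n}. qmul \<alpha> \<beta> (qmul \<alpha> \<beta> (x i) (a i)) (qconj (y i)))"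

definition lat :: "'k::field \<Rightarrow> 'k \<Rightarrow> ('k \<Rightarrow> int) \<Rightarrow> (nat \<Rightarrow> nat \<Rightarrow> 'k quat) \<Rightarrow>
                   nat set \<Rightarrow> (nat \<Rightarrow> 'k quat) set" where
  "lat \<alpha> \<beta> v S I = {(\<Sum>i\<in>I. vsmul \<alpha> \<beta> (c i) (S i)) | c. \<forall>i\<in>I. c i \<in> OD \<alpha> \<beta> v}"

definition isometry :: "'k::field \<Rightarrow> 'k \<Rightarrow> nat \<Rightarrow> (nat \<Rightarrow> 'k quat) \<Rightarrow>
                        ((nat \<Rightarrow> 'k quat) \<Rightarrow> (nat \<Rightarrow> 'k quat)) \<Rightarrow> bool" where
  "isometry \<alpha> \<beta> n a \<phi> \<longleftrightarrow>
     bij_betw \<phi> (Vsp n) (Vsp n) \<and>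
     (\<forall>x\<in>Vsp n. \<forall>y\<in>Vsp n. \<phi> (x + y) = \<phi> x + \<phi> y) \<and>
     (\<forall>d. \<forall>x\<in>Vsp n. \<phi> (vsmul \<alpha> \<beta> d x) = vsmul \<alpha> \<beta> d (\<phi> x)) \<and>
     (\<forall>x\<in>Vsp n. \<forall>y\<in>Vsp n. hf \<alpha> \<beta> n a (\<phi> x) (\<phi> y) = hf \<alpha> \<beta> n a x y)"

definition Uplus :: "'k::field \<Rightarrow> 'k \<Rightarrow> nat \<Rightarrow> (nat \<Rightarrow> 'k quat) \<Rightarrow> (nat \<Rightarrow> 'k quat) set \<Rightarrow>
                     ((nat \<Rightarrow> 'k quat) \<Rightarrow> (nat \<Rightarrow> 'k quat)) set" where
  "Uplus \<alpha> \<beta> n a L = {\<phi>. isometry \<alpha> \<beta> n a \<phi> \<and> \<phi> ` L = L}"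

definition srot :: "'k::field \<Rightarrow> 'k \<Rightarrow> nat \<Rightarrow> (nat \<Rightarrow> 'k quat) \<Rightarrow> (nat \<Rightarrow> 'k quat) \<Rightarrow>
                    'k quat \<Rightarrow> (nat \<Rightarrow> 'k quat) \<Rightarrow> (nat \<Rightarrow> 'k quat)" where
  "srot \<alpha> \<beta> n a s \<sigma> x = x - vsmul \<alpha> \<beta> (qmul \<alpha> \<beta> (hf \<alpha> \<beta> n a x s) (qinv \<alpha> \<beta> \<sigma>)) s"

definition mu_list :: "int list \<Rightarrow> int" where
  "mu_list xs = (let ys = sort xs in Min {ys ! (i + 1) - ys ! i | i. i + 1 < length ys})"

end

theory Submission
  imports Defs
begin


lemma qmul_assoc: "qmul al be (qmul al be x y) z = qmul al be x (qmul al be y z)"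
  by (cases x; cases y; cases z) (simp add: qmul_def algebra_simps)

lemma qmul_add_right: "qmul al be x (y + z) = qmul al be x y + qmul al be x z"
  by (cases x; cases y; cases z) (simp add: qmul_def algebra_simps)
lemma qmul_add_left: "qmul al be (x + y) z = qmul al be x z + qmul al be y z"
  by (cases x; cases y; cases z) (simp add: qmul_def algebra_simps)
lemma qmul_diff_right: "qmul al be x (y - z) = qmul al be x y - qmul al be x z"
  by (cases x; cases y; cases z) (simp add: qmul_def algebra_simps)
lemma qmul_diff_left: "qmul al be (x - y) z = qmul al be x z - qmul al be y z"
  by (cases x; cases y; cases z) (simp add: qmul_def algebra_simps)
lemma qmul_minus_left: "qmul al be (- x) z = - qmul al be x z"
  by (cases x; cases z) (simp add: qmul_def algebra_simps)
lemma qmul_zero_left[simp]: "qmul al be 0 z = 0"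
  by (cases z) (simp add: qmul_def zero_prod_def)
lemma qmul_zero_right[simp]: "qmul al be z 0 = 0"
  by (cases z) (simp add: qmul_def zero_prod_def)
lemma qmul_one_left[simp]: "qmul al be (qk 1) z = z"
  by (cases z) (simp add: qmul_def qk_def)
lemma qmul_one_right[simp]: "qmul al be z (qk 1) = z"
  by (cases z) (simp add: qmul_def qk_def)
lemma qconj_zero[simp]: "qconj 0 = 0" by (simp add: qconj_def zero_prod_def)
lemma qconj_one[simp]: "qconj (qk 1) = qk 1" by (simp add: qconj_def qk_def)
lemma qnorm_mul: "qnorm al be (qmul al be x y) = qnorm al be x * qnorm al be y"
  by (cases x; cases y) (simp add: qmul_def qnorm_def power2_eq_square algebra_simps)
lemma qnorm_conj: "qnorm al be (qconj x) = qnorm al be x"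
  by (cases x) (simp add: qconj_def qnorm_def)
lemma qnorm_add: "qnorm al be (x + y) = qnorm al be x + qnorm al be y + 2 * fst (qmul al be x (qconj y))"
  by (cases x; cases y) (simp add: qmul_def qnorm_def qconj_def power2_eq_square algebra_simps)
lemma qnorm_qk: "qnorm al be (qk c) = c^2" by (simp add: qnorm_def qk_def)
lemma qnorm_one_plus: "qnorm al be (qk 1 + x) = 1 + 2 * fst x + qnorm al be x"
  by (cases x) (simp add: qnorm_def qk_def power2_eq_square algebra_simps)
lemma pure_conj_mul: "pure_quat a \<Longrightarrow> pure_quat (qmul al be (qmul al be x a) (qconj x))"
  by (cases x; cases a) (simp add: pure_quat_def qmul_def qconj_def algebra_simps)


lemma qmul_conj_right: "qmul al be x (qconj x) = qk (qnorm al be x)"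
  by (cases x) (simp add: qmul_def qconj_def qk_def qnorm_def power2_eq_square algebra_simps)
lemma qmul_conj_left: "qmul al be (qconj x) x = qk (qnorm al be x)"
  by (cases x) (simp add: qmul_def qconj_def qk_def qnorm_def power2_eq_square algebra_simps)
lemma qmul_qk_comm: "qmul al be x (qmul al be (qk c) y) = qmul al be (qk c) (qmul al be x y)"
  by (cases x; cases y) (simp add: qmul_def qk_def algebra_simps)
lemma qmul_qk_qk: "qmul al be (qk c) (qk d) = qk (c * d)"
  by (simp add: qmul_def qk_def)
lemma qk_inverse: "c \<noteq> 0 \<Longrightarrow> qk (inverse c * c) = qk 1" "c \<noteq> 0 \<Longrightarrow> qk (c * inverse c) = qk 1"
  by simp_all
lemma qmul_inv_right: "qnorm al be x \<noteq> 0 \<Longrightarrow> qmul al be x (qinv al be x) = qk 1"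
  by (simp add: qinv_def qmul_qk_comm qmul_conj_right qmul_qk_qk left_inverse)
lemma qmul_inv_left: "qnorm al be x \<noteq> 0 \<Longrightarrow> qmul al be (qinv al be x) x = qk 1"
  by (simp add: qinv_def qmul_assoc qmul_conj_left qmul_qk_qk left_inverse)
lemma qnorm_inv: "qnorm al be (qinv al be x) = inverse (qnorm al be x)"
  by (cases "qnorm al be x = 0") (simp_all add: qinv_def qnorm_mul qnorm_qk qnorm_conj power2_eq_square)
lemma qmul_roots: "r1 + r2 = 2 * fst x \<Longrightarrow> r1 * r2 = qnorm al be x \<Longrightarrow>
   qmul al be (x - qk r1) (x - qk r2) = 0"
proof -
  assume h1: "r1 + r2 = 2 * fst x" and h2: "r1 * r2 = qnorm al be x"
  obtain a b c d where x: "x = (a,b,c,d)" by (cases x)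
  have r2: "r2 = 2 * a - r1" using h1 x by (simp add: algebra_simps)
  have h2': "r1 * (2 * a - r1) = a^2 - al*b^2 - be*c^2 + al*be*d^2" using h2 x r2 by (simp add: qnorm_def)
  show ?thesis using h2' unfolding x r2
    by (simp add: qmul_def qk_def zero_prod_def algebra_simps power2_eq_square)
qed
lemma qnorm_zero[simp]: "qnorm al be 0 = 0" by (simp add: qnorm_def zero_prod_def)
lemma qconj_add: "qconj (x + y) = qconj x + qconj y"
  by (cases x; cases y) (simp add: qconj_def)
lemma qconj_mul: "qconj (qmul al be x y) = qmul al be (qconj y) (qconj x)"
  by (cases x; cases y) (simp add: qmul_def qconj_def algebra_simps)
lemma fst_qk: "fst (qk c) = c" by (simp add: qk_def)


definition vge :: "('k::field \<Rightarrow> int) \<Rightarrow> 'k \<Rightarrow> int \<Rightarrow> bool" where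
  "vge v x M \<longleftrightarrow> x = 0 \<or> M \<le> v x"

locale dlf =
  fixes v :: "'k::field_char_0 \<Rightarrow> int"
  assumes D: "dyadic_local_field v"
begin

lemma vmult: "x \<noteq> 0 \<Longrightarrow> y \<noteq> 0 \<Longrightarrow> v (x * y) = v x + v y"
  using D unfolding dyadic_local_field_def by blast
lemma vadd: "x \<noteq> 0 \<Longrightarrow> y \<noteq> 0 \<Longrightarrow> x + y \<noteq> 0 \<Longrightarrow> min (v x) (v y) \<le> v (x + y)"
  using D unfolding dyadic_local_field_def by blast
lemma v2: "0 < v 2" using D unfolding dyadic_local_field_def by blast
lemma v_one[simp]: "v 1 = 0" using vmult[of 1 1] by simp
lemma v_minus_one: "v (-1) = 0"
  using vmult[of "-1" "-1"] by simp
lemma v_minus[simp]: "v (- x) = v x"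
proof (cases "x = 0")
  case False
  then show ?thesis using vmult[of "-1" x] v_minus_one by simp
qed simp
lemma v_inverse: "x \<noteq> 0 \<Longrightarrow> v (inverse x) = - v x"
  using vmult[of x "inverse x"] by simp
lemma v_div: "x \<noteq> 0 \<Longrightarrow> y \<noteq> 0 \<Longrightarrow> v (x / y) = v x - v y"
  by (simp add: divide_inverse vmult v_inverse)
lemma v_pow2: "x \<noteq> 0 \<Longrightarrow> v (x^2) = 2 * v x"
  by (simp add: power2_eq_square vmult)
lemma v4: "v 4 = 2 * v 2"
  using vmult[of 2 2] by simp
lemma v16: "v 16 = 2 * v 4"
  using vmult[of 4 4] by simp

lemma vge_zero[simp]: "vge v 0 M" by (simp add: vge_def)
lemma vge_mono: "vge v x M \<Longrightarrow> N \<le> M \<Longrightarrow> vge v x N" by (auto simp: vge_def)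
lemma vge_add: "vge v x M \<Longrightarrow> vge v y M \<Longrightarrow> vge v (x + y) M"
  unfolding vge_def using vadd[of x y] by (cases "x = 0"; cases "y = 0"; cases "x + y = 0") auto
lemma vge_minus[simp]: "vge v (- x) M = vge v x M" by (simp add: vge_def)
lemma vge_diff: "vge v x M \<Longrightarrow> vge v y M \<Longrightarrow> vge v (x - y) M"
  using vge_add[of x M "- y"] by simp
lemma vge_diff_sym: "vge v (x - y) M = vge v (y - x) M"
  using vge_minus[of "x - y" M] by simp
lemma vge_mult: "vge v x M \<Longrightarrow> vge v y N \<Longrightarrow> vge v (x * y) (M + N)"
  unfolding vge_def by (cases "x = 0"; cases "y = 0") (auto simp: vmult)
lemma vge_sum: "finite A \<Longrightarrow> (\<And>i. i \<in> A \<Longrightarrow> vge v (f i) M) \<Longrightarrow> vge v (sum f A) M"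
  by (induction A rule: finite_induct) (auto intro: vge_add)
lemma vge_contra: "(\<And>M. M \<ge> K \<Longrightarrow> vge v x M) \<Longrightarrow> x = 0"
proof (rule ccontr)
  assume h: "\<And>M. M \<ge> K \<Longrightarrow> vge v x M" and x: "x \<noteq> 0"
  from h[of "max K (v x + 1)"] x show False by (simp add: vge_def)
qed
lemma vge_one_minus: "vge v z 1 \<Longrightarrow> 1 - z \<noteq> 0 \<and> v (1 - z) = 0"
proof -
  assume z: "vge v z 1"
  have ne: "1 - z \<noteq> 0" using z by (auto simp: vge_def)
  moreover have "v (1 - z) = 0"
  proof (cases "z = 0")
    case False
    have a: "0 \<le> v (1 - z)" using vadd[of 1 "- z"] z False ne by (auto simp: vge_def)
    have "min (v (1 - z)) (v z) \<le> v ((1 - z) + z)" using vadd[of "1 - z" z] ne False by simp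
    then have "v (1 - z) \<le> 0" using z False by (auto simp: vge_def)
    with a show ?thesis by simp
  qed simp
  ultimately show ?thesis by simp
qed

lemma q_ge2: "2 \<le> residue_card v"
proof -
  let ?cl = "\<lambda>x. {y \<in> val_ring v. x - y = 0 \<or> 1 \<le> v (x - y)}"
  have f: "finite (residue_classes v)" using D unfolding dyadic_local_field_def by blast
  have r0: "(0::'k) \<in> val_ring v" and r1: "(1::'k) \<in> val_ring v" by (auto simp: val_ring_def)
  have "?cl 0 \<noteq> ?cl 1"
  proof
    assume "?cl 0 = ?cl 1"
    moreover have "1 \<in> ?cl 1" using r1 by simp
    ultimately have "1 \<in> ?cl 0" by simp
    then show False using v_minus_one by simp
  qed
  moreover have "?cl 0 \<in> residue_classes v" "?cl 1 \<in> residue_classes v"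
    using r0 r1 unfolding residue_classes_def by blast+
  ultimately have "card {?cl 0, ?cl 1} \<le> card (residue_classes v)"
    using f by (intro card_mono) auto
  then show ?thesis using \<open>?cl 0 \<noteq> ?cl 1\<close> by (simp add: residue_card_def)
qed

lemma powi_le_iff: "(real (residue_card v) powi a \<le> real (residue_card v) powi b) \<longleftrightarrow> a \<le> b"
proof
  let ?q = "real (residue_card v)"
  have q1: "1 < ?q" using q_ge2 by simp
  assume h: "?q powi a \<le> ?q powi b"
  have "?q powi a = ?q powi (a - b) * ?q powi b"
    using q1 by (simp add: power_int_add[symmetric])
  then have "?q powi (a - b) * ?q powi b \<le> 1 * ?q powi b" using h by simp
  moreover have "0 < ?q powi b" using q1 by simp
  ultimately have "?q powi (a - b) \<le> ?q powi 0" by simp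
  then have "a - b \<le> 0" using power_int_le_imp_le_exp[OF q1] by blast
  then show "a \<le> b" by simp
next
  assume "a \<le> b"
  then show "real (residue_card v) powi a \<le> real (residue_card v) powi b"
    using q_ge2 by (intro power_int_increasing) auto
qed

lemma absk_le_one: "absk v x \<le> 1 \<longleftrightarrow> vge v x 0"
  using powi_le_iff[of "- v x" 0] by (auto simp: absk_def vge_def)

lemma absk_le: "y \<noteq> 0 \<Longrightarrow> absk v x \<le> absk v y \<Longrightarrow> vge v x (v y)"
proof -
  assume y: "y \<noteq> 0" and h: "absk v x \<le> absk v y"
  show ?thesis
  proof (cases "x = 0")
    case False
    then have "real (residue_card v) powi (- v x) \<le> real (residue_card v) powi (- v y)"
      using h y by (simp add: absk_def)
    then show ?thesis using powi_le_iff by (simp add: vge_def)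
  qed (simp add: vge_def)
qed

lemma hensel: assumes c: "vge v c 1" shows "\<exists>y. vge v y 1 \<and> y = y^2 + c"
proof -
  define f where "f = rec_nat 0 (\<lambda>_ y. y^2 + c)"
  have f0: "f 0 = 0" and fS: "\<And>k. f (Suc k) = (f k)^2 + c" by (simp_all add: f_def)
  have fv: "vge v (f k) 1" for k
  proof (induction k)
    case (Suc k)
    have "vge v ((f k)^2) 2" using vge_mult[OF Suc Suc] by (simp add: power2_eq_square)
    then have "vge v ((f k)^2) 1" by (rule vge_mono) simp
    then show ?case using fS c by (simp add: vge_add)
  qed (simp add: f0)
  have fd: "vge v (f (Suc k) - f k) (int k + 1)" for k
  proof (induction k)
    case 0 then show ?case using c by (simp add: f0 fS)
  next
    case (Suc k)
    have e: "f (Suc (Suc k)) - f (Suc k) = (f (Suc k) - f k) * (f (Suc k) + f k)"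
      by (simp add: fS algebra_simps power2_eq_square)
    have "vge v (f (Suc k) + f k) 1" using fv by (simp add: vge_add)
    from vge_mult[OF Suc this] show ?case by (simp add: e)
  qed
  have fc: "vge v (f (i + d) - f i) (int i + 1)" for i d
  proof (induction d)
    case (Suc d)
    have e: "f (i + Suc d) - f i = (f (Suc (i + d)) - f (i + d)) + (f (i + d) - f i)" by simp
    have "vge v (f (Suc (i + d)) - f (i + d)) (int i + 1)"
      using fd[of "i + d"] by (rule vge_mono) simp
    from vge_add[OF this Suc] show ?case unfolding e .
  qed simp
  have cauchy: "\<forall>M. \<exists>N. \<forall>i\<ge>N. \<forall>j\<ge>N. f i = f j \<or> M \<le> v (f i - f j)"
  proof
    fix M :: int
    show "\<exists>N. \<forall>i\<ge>N. \<forall>j\<ge>N. f i = f j \<or> M \<le> v (f i - f j)"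
    proof (intro exI allI impI)
      fix i j assume i: "nat M \<le> i" and j: "nat M \<le> j"
      have "vge v (f i - f j) M"
      proof (cases "i \<le> j")
        case True
        then obtain d where "j = i + d" using le_Suc_ex by blast
        then have "vge v (f j - f i) (int i + 1)" using fc by simp
        then have "vge v (f j - f i) M" by (rule vge_mono) (use i in linarith)
        then show ?thesis using vge_diff_sym by blast
      next
        case False
        then obtain d where "i = j + d" using le_Suc_ex[of j i] by auto
        then have "vge v (f i - f j) (int j + 1)" using fc by simp
        then show ?thesis by (rule vge_mono) (use j in linarith)
      qed
      then show "f i = f j \<or> M \<le> v (f i - f j)" by (auto simp: vge_def)
    qed
  qed
  then obtain L where L: "\<forall>M. \<exists>N. \<forall>i\<ge>N. f i = L \<or> M \<le> v (f i - L)"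
    using D unfolding dyadic_local_field_def by blast
  have Lc: "\<exists>N. \<forall>i\<ge>N. vge v (f i - L) M" for M
    using L[rule_format, of M] by (auto simp: vge_def)
  obtain N1 where N1: "\<forall>i\<ge>N1. vge v (f i - L) 1" using Lc by blast
  have "L = f N1 - (f N1 - L)" by simp
  then have Lv: "vge v L 1" using N1 fv by (metis order_refl vge_diff)
  have "L - (L^2 + c) = 0"
  proof (rule vge_contra[where K=1])
    fix M :: int assume M: "M \<ge> 1"
    obtain N where N: "\<forall>i\<ge>N. vge v (f i - L) M" using Lc by blast
    have e: "L - (L^2 + c) = - (f (Suc N) - L) + (f N - L) * (f N + L)"
      by (simp add: fS algebra_simps power2_eq_square)
    have "vge v (f N + L) 1" using fv Lv by (simp add: vge_add)
    then have "vge v ((f N - L) * (f N + L)) (M + 1)" using N vge_mult by blast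
    then have "vge v ((f N - L) * (f N + L)) M" by (rule vge_mono) simp
    moreover have "vge v (f (Suc N) - L) M" using N by simp
    ultimately show "vge v (L - (L^2 + c)) M" unfolding e by (intro vge_add) (simp_all add: vge_diff_sym[of L])
  qed
  then show ?thesis using Lv by auto
qed

end


locale dq = dlf v for v :: "'k::field_char_0 \<Rightarrow> int" +
  fixes al be :: 'k
  assumes QDIV: "quat_division al be"
begin

lemma qnorm_eq0[simp]: "qnorm al be x = 0 \<longleftrightarrow> x = 0"
proof
  assume "qnorm al be x = 0"
  then show "x = 0" using QDIV unfolding quat_division_def by (cases x) blast
qed simp

lemma v4pos: "0 < v 4" using v4 v2 by simp

lemma square_thm: assumes u: "vge v (u - 1) (v 4 + 1)"
  shows "\<exists>X. X \<noteq> 0 \<and> v X = 0 \<and> X^2 = u"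
proof -
  define c where "c = (1 - u) / 4"
  have c1: "vge v c 1"
  proof (cases "u = 1")
    case False
    then have "1 - u \<noteq> 0" by simp
    moreover have "v (1 - u) \<ge> v 4 + 1" using u False vge_diff_sym[of u 1] by (auto simp: vge_def)
    ultimately show ?thesis by (simp add: c_def vge_def v_div)
  qed (simp add: c_def)
  obtain Y where Y: "vge v Y 1" "Y = Y^2 + c" using hensel[OF c1] by blast
  have "vge v 2 0" using v2 by (simp add: vge_def)
  from vge_mult[OF this Y(1)] have "vge v (2 * Y) 1" by simp
  from vge_one_minus[OF this] have X: "1 - 2 * Y \<noteq> 0 \<and> v (1 - 2 * Y) = 0" .
  have "(1 - 2 * Y)^2 = 1 - 4 * (Y - Y^2)" by (simp add: power2_eq_square algebra_simps)
  also have "Y - Y^2 = c" using Y(2) diff_eq_eq add.commute by metis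
  finally have e1: "(1 - 2 * Y)^2 = 1 - 4 * c" .
  have "1 - 4 * c = u" by (simp add: c_def field_simps)
  with e1 have "(1 - 2 * Y)^2 = u" by simp
  with X show ?thesis by blast
qed

lemma trace_bound: assumes x: "x \<noteq> 0" and T: "2 * fst x \<noteq> 0"
  shows "v (qnorm al be x) \<le> 2 * v (2 * fst x)"
proof (rule ccontr)
  let ?T = "2 * fst x" and ?N = "qnorm al be x"
  assume "\<not> ?thesis"
  then have lt: "2 * v ?T < v ?N" by simp
  have N0: "?N \<noteq> 0" using x by simp
  define c where "c = ?N / ?T^2"
  have T2: "?T^2 \<noteq> 0" using T by simp
  have "v c = v ?N - v (?T^2)" unfolding c_def by (rule v_div[OF N0 T2])
  then have vc: "v c = v ?N - 2 * v ?T" using v_pow2[OF T] by simp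
  have c0: "c \<noteq> 0" using N0 T by (simp add: c_def)
  have "vge v c 1" using vc lt by (simp add: vge_def)
  then obtain y where y: "y = y^2 + c" using hensel by blast
  define r1 where "r1 = ?T * y"
  define r2 where "r2 = ?T * (1 - y)"
  have s: "r1 + r2 = 2 * fst x" by (simp add: r1_def r2_def algebra_simps)
  have "r1 * r2 = ?T^2 * (y - y^2)" by (simp add: r1_def r2_def power2_eq_square algebra_simps)
  also have cy: "y - y^2 = c" using y diff_eq_eq add.commute by metis
  finally have p: "r1 * r2 = ?N" using T2 by (simp add: c_def)
  have "qmul al be (x - qk r1) (x - qk r2) = 0" by (rule qmul_roots[OF s p])
  then have "qnorm al be (x - qk r1) * qnorm al be (x - qk r2) = 0"
    by (metis qnorm_mul qnorm_zero)
  then have "x = qk r1 \<or> x = qk r2" by simp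
  then have "fst x = r1 \<or> fst x = r2" by (auto simp: qk_def)
  then have "?T * (2 * y - 1) = 0"
    by (auto simp: r1_def r2_def algebra_simps)
  then have y12: "y = 1/2" using T by (simp add: field_simps)
  have "c = y - y^2" using cy by simp
  also have "\<dots> = 1/4" unfolding y12 by (simp add: power2_eq_square)
  finally have "c = 1/4" .
  then have "v c = v 1 - v 4" using v_div[of 1 4] by (simp only:) simp
  then have "v c = - v 4" by simp
  with vc lt v4pos show False by simp
qed

lemma vge_trace: "vge v (qnorm al be x) M \<Longrightarrow> 2 * K \<le> M + 1 \<Longrightarrow> vge v (2 * fst x) K"
proof -
  assume h: "vge v (qnorm al be x) M" and K: "2 * K \<le> M + 1"
  show ?thesis
  proof (cases "x = 0 \<or> 2 * fst x = 0")
    case True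
    then show ?thesis by (auto simp: zero_prod_def)
  next
    case False
    then have "v (qnorm al be x) \<le> 2 * v (2 * fst x)" using trace_bound by blast
    moreover have "M \<le> v (qnorm al be x)" using h False by (simp add: vge_def)
    ultimately show ?thesis using K by (simp add: vge_def)
  qed
qed

lemma vge_qnorm_add: "vge v (qnorm al be x) K \<Longrightarrow> vge v (qnorm al be y) K \<Longrightarrow>
   vge v (qnorm al be (x + y)) K"
proof -
  assume hx: "vge v (qnorm al be x) K" and hy: "vge v (qnorm al be y) K"
  have "vge v (qnorm al be (qmul al be x (qconj y))) (K + K)"
    using vge_mult[OF hx hy] by (simp add: qnorm_mul qnorm_conj)
  then have "vge v (2 * fst (qmul al be x (qconj y))) K"
    by (rule vge_trace) simp
  then show ?thesis using hx hy by (simp add: qnorm_add vge_add)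
qed

lemma vge_qnorm_sum: "finite A \<Longrightarrow> (\<And>i. i \<in> A \<Longrightarrow> vge v (qnorm al be (f i)) K) \<Longrightarrow>
   vge v (qnorm al be (sum f A)) K"
  by (induction A rule: finite_induct) (auto intro: vge_qnorm_add)

lemma OD_iff: "q \<in> OD al be v \<longleftrightarrow> vge v (qnorm al be q) 0"
  by (simp add: OD_def absD_def absk_le_one)

lemma OD_mul: "p \<in> OD al be v \<Longrightarrow> q \<in> OD al be v \<Longrightarrow> qmul al be p q \<in> OD al be v"
  using vge_mult by (fastforce simp: OD_iff qnorm_mul)

end


lemma fin_diffs: "finite {f i |i. i + 1 < (L::nat)}"
  by (rule finite_subset[of _ "f ` {..<L}"]) auto

lemma mu_a:
  fixes g :: "nat \<Rightarrow> int"
  assumes mono: "\<forall>i\<in>{1..<n}. g i \<le> g (Suc i)" and i: "1 \<le> i" "i < n"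
  shows "g (Suc i) - g i \<ge> mu_list (map g [1..<Suc n])"
proof -
  let ?xs = "map g [1..<Suc n]"
  have len: "length ?xs = n" by simp
  have nth: "\<And>j. j < n \<Longrightarrow> ?xs ! j = g (Suc j)" by (simp del: upt_Suc add: nth_upt)
  have "sorted ?xs" unfolding sorted_iff_nth_Suc using mono by (auto simp del: upt_Suc simp: nth_upt)
  then have s: "sort ?xs = ?xs" by (rule sorted_sort_id)
  have "mu_list ?xs = Min {?xs ! (j + 1) - ?xs ! j |j. j + 1 < n}"
    unfolding mu_list_def Let_def s len ..
  also have "\<dots> \<le> ?xs ! (i - 1 + 1) - ?xs ! (i - 1)"
  proof (rule Min_le[OF fin_diffs])
    show "?xs ! (i - 1 + 1) - ?xs ! (i - 1) \<in> {?xs ! (j + 1) - ?xs ! j |j. j + 1 < n}"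
      using i by (intro CollectI exI[of _ "i - 1"]) simp
  qed
  also have "\<dots> = g (Suc i) - g i" using i by (simp del: upt_Suc add: nth)
  finally show ?thesis .
qed

lemma mu_c:
  fixes g :: "nat \<Rightarrow> int"
  assumes mono: "\<forall>i\<in>{1..<n}. g i \<le> g (Suc i)" and pos: "0 < mu_list (map g [1..<Suc n])"
    and p: "1 \<le> p" and l: "p < l" "l \<le> n"
  shows "g l - g p \<ge> mu_list (map g [1..<Suc n])"
  using l
proof (induction l)
  case (Suc l)
  show ?case
  proof (cases "p < l")
    case True
    have "g (Suc l) - g l \<ge> mu_list (map g [1..<Suc n])"
      by (rule mu_a[OF mono]) (use True p Suc in auto)
    with Suc True show ?thesis using pos by simp
  next
    case False
    then have "l = p" using Suc by simp
    then show ?thesis using mu_a[OF mono, of p] p Suc by simp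
  qed
qed simp

lemma mu_b:
  fixes g :: "nat \<Rightarrow> int"
  assumes mono: "\<forall>i\<in>{1..<n}. g i \<le> g (Suc i)" and m: "1 \<le> m" and t: "1 \<le> t" "m + t \<le> n"
  shows "mu_list (map (\<lambda>i. g (m + i - 1)) [1..<t+2]) \<ge> mu_list (map g [1..<Suc n])"
proof -
  let ?ys = "map (\<lambda>i. g (m + i - 1)) [1..<t+2]"
  have len: "length ?ys = t + 1" by simp
  have nth: "\<And>j. j < t + 1 \<Longrightarrow> ?ys ! j = g (m + j)" by (simp del: upt_Suc add: nth_upt)
  have "sorted ?ys" unfolding sorted_iff_nth_Suc using mono m t
    by (auto simp del: upt_Suc simp: nth_upt)
  then have s: "sort ?ys = ?ys" by (rule sorted_sort_id)
  have "mu_list ?ys = Min {?ys ! (j + 1) - ?ys ! j |j. j + 1 < t + 1}"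
    unfolding mu_list_def Let_def s len ..
  also have "\<dots> \<ge> mu_list (map g [1..<Suc n])"
  proof (rule Min.boundedI[OF fin_diffs])
    show "{?ys ! (j + 1) - ?ys ! j |j. j + 1 < t + 1} \<noteq> {}" using t by (auto intro: exI[of _ 0])
  next
    fix d assume "d \<in> {?ys ! (j + 1) - ?ys ! j |j. j + 1 < t + 1}"
    then obtain j where j: "j + 1 < t + 1" "d = ?ys ! (j + 1) - ?ys ! j" by blast
    then have "d = g (Suc (m + j)) - g (m + j)" by (simp del: upt_Suc add: nth)
    moreover have "g (Suc (m + j)) - g (m + j) \<ge> mu_list (map g [1..<Suc n])"
      by (rule mu_a[OF mono]) (use j m t in auto)
    ultimately show "mu_list (map g [1..<Suc n]) \<le> d" by simp
  qed
  finally show ?thesis .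
qed

lemma sum_fun_apply: "(\<Sum>i\<in>A. (f i :: nat \<Rightarrow> 'a::comm_monoid_add)) j = (\<Sum>i\<in>A. f i j)"
  by (induction A rule: infinite_finite_induct) auto

lemma vsmul_apply[simp]: "vsmul al be d x i = qmul al be d (x i)"
  by (simp add: vsmul_def)



lemma unit_sum: "finite I \<Longrightarrow> (\<Sum>i\<in>I. vsmul al be (c i) (unitv i)) j = (if j \<in> I then c j else 0)"
proof -
  assume f: "finite I"
  have "(\<Sum>i\<in>I. vsmul al be (c i) (unitv i)) j = (\<Sum>i\<in>I. qmul al be (c i) (unitv i j))"
    by (simp add: sum_fun_apply)
  also have "\<dots> = (\<Sum>i\<in>I. if j = i then c j else 0)"
    by (rule sum.cong) (auto simp: unitv_def)
  also have "\<dots> = (if j \<in> I then c j else 0)" using f by (simp add: sum.delta)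
  finally show ?thesis .
qed

lemma hf_single: "j \<in> {1..n} \<Longrightarrow> (\<forall>k\<in>{1..n}. k \<noteq> j \<longrightarrow> x k = 0 \<or> y k = 0) \<Longrightarrow>
  hf al be n a x y = qmul al be (qmul al be (x j) (a j)) (qconj (y j))"
proof -
  assume j: "j \<in> {1..n}" and h: "\<forall>k\<in>{1..n}. k \<noteq> j \<longrightarrow> x k = 0 \<or> y k = 0"
  have "hf al be n a x y = (\<Sum>k\<in>{1..n}. if j = k then qmul al be (qmul al be (x j) (a j)) (qconj (y j)) else 0)"
    unfolding hf_def by (rule sum.cong) (use h in auto)
  also have "\<dots> = qmul al be (qmul al be (x j) (a j)) (qconj (y j))" using j by (simp add: sum.delta)
  finally show ?thesis .
qed

lemma hf_zero: "(\<forall>k\<in>{1..n}. x k = 0 \<or> y k = 0) \<Longrightarrow> hf al be n a x y = 0"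
  unfolding hf_def by (rule sum.neutral) auto

lemma lat_unit_iff: "x \<in> lat al be v unitv {1..n} \<longleftrightarrow> x \<in> Vsp n \<and> (\<forall>j\<in>{1..n}. x j \<in> OD al be v)"
proof
  assume "x \<in> lat al be v unitv {1..n}"
  then obtain c where c: "\<forall>i\<in>{1..n}. c i \<in> OD al be v" and x: "x = (\<Sum>i\<in>{1..n}. vsmul al be (c i) (unitv i))"
    unfolding lat_def by blast
  have xj: "x j = (if j \<in> {1..n} then c j else 0)" for j unfolding x by (rule unit_sum) simp
  show "x \<in> Vsp n \<and> (\<forall>j\<in>{1..n}. x j \<in> OD al be v)"
    using c by (auto simp: Vsp_def xj)
next
  assume h: "x \<in> Vsp n \<and> (\<forall>j\<in>{1..n}. x j \<in> OD al be v)"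
  have "x = (\<Sum>i\<in>{1..n}. vsmul al be (x i) (unitv i))"
  proof
    fix j show "x j = (\<Sum>i\<in>{1..n}. vsmul al be (x i) (unitv i)) j"
      using h by (simp add: unit_sum Vsp_def)
  qed
  then show "x \<in> lat al be v unitv {1..n}" using h unfolding lat_def by blast
qed

lemma qmul_qk1_conj: "qmul al be (qmul al be (qk 1) x) (qconj (qk 1)) = x" by simp


theorem theorem2:
  fixes v :: "'k::field_char_0 \<Rightarrow> int" and \<alpha> \<beta> :: 'k and n m t :: nat
    and a lam :: "nat \<Rightarrow> 'k quat" and r \<sigma> :: "'k quat" and s :: "nat \<Rightarrow> 'k quat"
  assumes "dyadic_local_field v"
    and "quat_division \<alpha> \<beta>"
    and "\<forall>i\<in>{1..n}. pure_quat (a i) \<and> a i \<noteq> 0"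
    and "\<forall>i\<in>{1..<n}. vD \<alpha> \<beta> v (a i) \<le> vD \<alpha> \<beta> v (a (Suc i))"
    and "mu_list (map (\<lambda>i. vD \<alpha> \<beta> v (a i)) [1..<Suc n]) > vD \<alpha> \<beta> v (qk 4)"
    and "\<forall>i\<in>{2..n}. \<exists>c. c \<noteq> 0 \<and> qnorm \<alpha> \<beta> (a i) = qnorm \<alpha> \<beta> (a 1) * c ^ 2"
    and "1 \<le> m" and "m \<le> n"
    and "r \<in> OD \<alpha> \<beta> v"
    and "\<forall>l\<in>{m+1..n}. lam l \<in> OD \<alpha> \<beta> v"
    and "s = vsmul \<alpha> \<beta> (qk 1 - r) (unitv m) - (\<Sum>l\<in>{m+1..n}. vsmul \<alpha> \<beta> (lam l) (unitv l))"
    and "\<sigma> = qmul \<alpha> \<beta> (a m) (qk 1 - qconj r)"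
    and "absD \<alpha> \<beta> v (qk 1 - qconj r) \<ge> absD \<alpha> \<beta> v (qk 2)"
    and "\<sigma> \<noteq> 0" and "\<sigma> - qconj \<sigma> = hf \<alpha> \<beta> n a s s"
    and "srot \<alpha> \<beta> n a s \<sigma> \<in> Uplus \<alpha> \<beta> n a (lat \<alpha> \<beta> v unitv {1..n})"
    and "1 \<le> t" and "t \<le> n - m"
    and "\<forall>l\<in>{1..n-m-t}. absD \<alpha> \<beta> v (lam (m+t)) \<ge> absD \<alpha> \<beta> v (lam (m+t+l))"
  shows "\<exists>S b.
     (\<forall>i\<in>{1..t+1}. S i \<in> Vsp n \<and> pure_quat (b i) \<and> b i \<noteq> 0 \<and> hf \<alpha> \<beta> n a (S i) (S i) = b i) \<and>
     (\<forall>i\<in>{1..t+1}. \<forall>j\<in>{1..t+1}. i \<noteq> j \<longrightarrow> hf \<alpha> \<beta> n a (S i) (S j) = 0) \<and>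
     lat \<alpha> \<beta> v S {1..t+1} \<subseteq> lat \<alpha> \<beta> v unitv {1..n} \<and>
     srot \<alpha> \<beta> n a s \<sigma> \<in> Uplus \<alpha> \<beta> n a (lat \<alpha> \<beta> v S {1..t+1}) \<and>
     mu_list (map (\<lambda>i. vD \<alpha> \<beta> v (b i)) [1..<t+2])
       \<ge> mu_list (map (\<lambda>i. vD \<alpha> \<beta> v (a i)) [1..<Suc n]) \<and>
     (\<forall>i\<in>{1..t+1}. \<exists>c. c \<noteq> 0 \<and> qnorm \<alpha> \<beta> (b i) = qnorm \<alpha> \<beta> (a 1) * c ^ 2)"
proof -
  note A = assms
  interpret dq v \<alpha> \<beta> using A(1,2) by (simp add: dq_def dlf_def dq_axioms_def)
  define p where "p = m + t"
  have mp: "m < p" "p \<le> n" "2 \<le> p" "1 \<le> p" using A(7,17,18) by (auto simp: p_def)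
  define g where "g = (\<lambda>i. vD \<alpha> \<beta> v (a i))"
  define M0 where "M0 = mu_list (map g [1..<Suc n])"
  have M0def: "mu_list (map (\<lambda>i. vD \<alpha> \<beta> v (a i)) [1..<Suc n]) = M0" by (simp add: M0_def g_def)
  have mono: "\<forall>i\<in>{1..<n}. g i \<le> g (Suc i)" using A(4) by (simp add: g_def)
  have v16: "vD \<alpha> \<beta> v (qk 4) = 2 * v 4"
    by (simp add: vD_def qnorm_qk v16 [symmetric])
  have M0big: "2 * v 4 + 1 \<le> M0" using A(5) v16 unfolding M0def by linarith
  have M0pos: "0 < M0" using M0big v4pos by simp
  have ane: "\<And>i. i \<in> {1..n} \<Longrightarrow> a i \<noteq> 0" using A(3) by blast
  have Nane: "\<And>i. i \<in> {1..n} \<Longrightarrow> qnorm \<alpha> \<beta> (a i) \<noteq> 0" using ane by simp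
  have gdiff: "\<And>l. p < l \<Longrightarrow> l \<le> n \<Longrightarrow> g l - g p \<ge> M0"
    unfolding M0_def by (rule mu_c[OF mono]) (use M0pos mp in \<open>auto simp: M0_def\<close>)
  define mu where "mu = (\<lambda>l. qmul \<alpha> \<beta> (qinv \<alpha> \<beta> (lam p)) (lam l))"
  have lamle: "\<And>l. p < l \<Longrightarrow> l \<le> n \<Longrightarrow> absD \<alpha> \<beta> v (lam l) \<le> absD \<alpha> \<beta> v (lam p)"
  proof -
    fix l assume l: "p < l" "l \<le> n"
    have "l - p \<in> {1..n-m-t}" using l by (auto simp: p_def)
    then have "absD \<alpha> \<beta> v (lam (m+t)) \<ge> absD \<alpha> \<beta> v (lam (m+t+(l-p)))" using A(19) by blast
    moreover have "m+t+(l-p) = l" using l by (simp add: p_def)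
    ultimately show "absD \<alpha> \<beta> v (lam l) \<le> absD \<alpha> \<beta> v (lam p)" by (simp add: p_def)
  qed
  have lam0: "\<And>l. p < l \<Longrightarrow> l \<le> n \<Longrightarrow> lam p = 0 \<Longrightarrow> lam l = 0"
  proof -
    fix l assume l: "p < l" "l \<le> n" and z: "lam p = 0"
    have "absD \<alpha> \<beta> v (lam l) \<le> 0" using lamle[OF l] z by (simp add: absD_def absk_def)
    moreover have "0 < real (residue_card v) powi (- v (qnorm \<alpha> \<beta> (lam l)))" using q_ge2 by simp
    ultimately have "qnorm \<alpha> \<beta> (lam l) = 0"
      by (auto simp: absD_def absk_def split: if_splits)
    then show "lam l = 0" by simp
  qed
  have muOD: "\<And>l. p < l \<Longrightarrow> l \<le> n \<Longrightarrow> vge v (qnorm \<alpha> \<beta> (mu l)) 0"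
  proof -
    fix l assume l: "p < l" "l \<le> n"
    show "vge v (qnorm \<alpha> \<beta> (mu l)) 0"
    proof (cases "lam p = 0")
      case True
      then show ?thesis by (simp add: mu_def qinv_def)
    next
      case False
      then have Np: "qnorm \<alpha> \<beta> (lam p) \<noteq> 0" by simp
      have "vge v (qnorm \<alpha> \<beta> (lam l)) (v (qnorm \<alpha> \<beta> (lam p)))"
        using absk_le[OF Np] lamle[OF l] by (simp add: absD_def)
      moreover have "vge v (inverse (qnorm \<alpha> \<beta> (lam p))) (- v (qnorm \<alpha> \<beta> (lam p)))"
        using Np by (simp add: vge_def v_inverse)
      ultimately have "vge v (inverse (qnorm \<alpha> \<beta> (lam p)) * qnorm \<alpha> \<beta> (lam l)) (- v (qnorm \<alpha> \<beta> (lam p)) + v (qnorm \<alpha> \<beta> (lam p)))"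
        using vge_mult by blast
      then show ?thesis by (simp add: mu_def qnorm_mul qnorm_inv)
    qed
  qed
  define w where "w = (\<lambda>j. if j = p then qk 1 else if p < j \<and> j \<le> n then mu j else (0::'k quat))"
  define T where "T = (\<lambda>l. qmul \<alpha> \<beta> (qmul \<alpha> \<beta> (mu l) (a l)) (qconj (mu l)))"
  define c where "c = (\<Sum>l\<in>{Suc p..n}. T l)"
  have hfww: "hf \<alpha> \<beta> n a w w = a p + c"
  proof -
    let ?F = "\<lambda>k. qmul \<alpha> \<beta> (qmul \<alpha> \<beta> (w k) (a k)) (qconj (w k))"
    have "hf \<alpha> \<beta> n a w w = sum ?F {1..n}" by (simp add: hf_def)
    also have "\<dots> = sum ?F {p..n}"
      by (rule sum.mono_neutral_right) (use mp in \<open>auto simp: w_def\<close>)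
    also have "\<dots> = ?F p + sum ?F {Suc p..n}" using mp by (simp add: sum.atLeast_Suc_atMost)
    also have "?F p = a p" by (simp add: w_def)
    also have "sum ?F {Suc p..n} = c" unfolding c_def by (rule sum.cong) (auto simp: w_def T_def)
    finally show ?thesis .
  qed
  have vgT: "\<And>l. l \<in> {Suc p..n} \<Longrightarrow> vge v (qnorm \<alpha> \<beta> (T l)) (g p + M0)"
  proof -
    fix l assume l: "l \<in> {Suc p..n}"
    have al: "vge v (qnorm \<alpha> \<beta> (a l)) (g p + M0)"
      using gdiff[of l] l Nane[of l] mp by (auto simp: vge_def g_def vD_def)
    have m1: "vge v (qnorm \<alpha> \<beta> (mu l)) 0" using muOD l by auto
    have "vge v (qnorm \<alpha> \<beta> (mu l) * qnorm \<alpha> \<beta> (a l) * qnorm \<alpha> \<beta> (mu l)) (0 + (g p + M0) + 0)"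
      by (intro vge_mult m1 al)
    then show "vge v (qnorm \<alpha> \<beta> (T l)) (g p + M0)" by (simp add: T_def qnorm_mul qnorm_conj)
  qed
  have vgc: "vge v (qnorm \<alpha> \<beta> c) (g p + M0)" unfolding c_def by (rule vge_qnorm_sum) (auto intro: vgT)
  have Nap: "qnorm \<alpha> \<beta> (a p) \<noteq> 0" using Nane mp by auto
  define eps where "eps = qmul \<alpha> \<beta> (qinv \<alpha> \<beta> (a p)) c"
  have gp: "g p = v (qnorm \<alpha> \<beta> (a p))" by (simp add: g_def vD_def)
  have veps: "vge v (qnorm \<alpha> \<beta> eps) M0"
  proof (cases "qnorm \<alpha> \<beta> c = 0")
    case False
    have "v (qnorm \<alpha> \<beta> eps) = - g p + v (qnorm \<alpha> \<beta> c)"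
      using False Nap by (simp add: eps_def qnorm_mul qnorm_inv vmult v_inverse gp)
    then show ?thesis using vgc False by (simp add: vge_def)
  qed (simp add: eps_def qnorm_mul)
  have vtr: "vge v (2 * fst eps) (v 4 + 1)" by (rule vge_trace[OF veps]) (use M0big in simp)
  have vN: "vge v (qnorm \<alpha> \<beta> eps) (v 4 + 1)" by (rule vge_mono[OF veps]) (use M0big v4pos in simp)
  have "vge v (qnorm \<alpha> \<beta> (qk 1 + eps) - 1) (v 4 + 1)"
    using vge_add[OF vtr vN] by (simp add: qnorm_one_plus)
  then obtain X where X: "X \<noteq> 0" "v X = 0" "X^2 = qnorm \<alpha> \<beta> (qk 1 + eps)" using square_thm by blast
  have bfac: "a p + c = qmul \<alpha> \<beta> (a p) (qk 1 + eps)"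
    by (simp add: eps_def qmul_add_right qmul_assoc[symmetric] qmul_inv_right[OF Nap])
  have Nb: "qnorm \<alpha> \<beta> (hf \<alpha> \<beta> n a w w) = qnorm \<alpha> \<beta> (a p) * X^2"
    by (simp add: hfww bfac qnorm_mul X(3))
  have bne: "hf \<alpha> \<beta> n a w w \<noteq> 0"
  proof
    assume "hf \<alpha> \<beta> n a w w = 0"
    then have "qnorm \<alpha> \<beta> (a p) * X^2 = 0" using Nb by simp
    then show False using Nap X(1) by simp
  qed
  have vDb: "vD \<alpha> \<beta> v (hf \<alpha> \<beta> n a w w) = g p"
  proof -
    have "vD \<alpha> \<beta> v (hf \<alpha> \<beta> n a w w) = v (qnorm \<alpha> \<beta> (a p) * X^2)" by (simp only: vD_def Nb)
    also have "\<dots> = g p" using vmult[OF Nap, of "X^2"] v_pow2[OF X(1)] X(1,2) gp by simp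
    finally show ?thesis .
  qed
  have bpure: "pure_quat (hf \<alpha> \<beta> n a w w)"
  proof -
    have "fst (T l) = 0" if "l \<in> {Suc p..n}" for l
      using pure_conj_mul[of "a l" \<alpha> \<beta> "mu l"] A(3) that mp by (auto simp: T_def pure_quat_def)
    then have "fst c = 0" by (simp add: c_def fst_sum)
    moreover have "fst (a p) = 0" using A(3) mp by (auto simp: pure_quat_def)
    ultimately show ?thesis by (simp add: hfww pure_quat_def)
  qed
  have bclass: "\<exists>c. c \<noteq> 0 \<and> qnorm \<alpha> \<beta> (hf \<alpha> \<beta> n a w w) = qnorm \<alpha> \<beta> (a 1) * c ^ 2"
  proof -
    obtain c0 where c0: "c0 \<noteq> 0" "qnorm \<alpha> \<beta> (a p) = qnorm \<alpha> \<beta> (a 1) * c0 ^ 2"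
      using A(6) \<open>2 \<le> p\<close> \<open>p \<le> n\<close> by (meson atLeastAtMost_iff)
    then have "qnorm \<alpha> \<beta> (hf \<alpha> \<beta> n a w w) = qnorm \<alpha> \<beta> (a 1) * (c0 * X) ^ 2"
      by (simp add: Nb power_mult_distrib)
    then show ?thesis using c0 X by (intro exI[of _ "c0 * X"]) simp
  qed

  define S where "S = (\<lambda>i. if i \<le> t then unitv (m + i - 1) else w)"
  define b where "b = (\<lambda>i. hf \<alpha> \<beta> n a (S i) (S i))"
  have w_lt: "\<And>j. j < p \<Longrightarrow> w j = 0" by (simp add: w_def)
  have Sle: "\<And>i. i \<le> t \<Longrightarrow> S i = unitv (m + i - 1)" by (simp add: S_def)
  have St: "S (Suc t) = w" by (simp add: S_def)
  have bsmall: "\<And>i. i \<in> {1..t} \<Longrightarrow> b i = a (m + i - 1)"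
  proof -
    fix i assume i: "i \<in> {1..t}"
    have "m + i - 1 \<in> {1..n}" using i A(7,18) by auto
    then have "hf \<alpha> \<beta> n a (unitv (m + i - 1)) (unitv (m + i - 1)) = a (m + i - 1)"
      by (subst hf_single[of "m + i - 1"]) (auto simp: unitv_def)
    then show "b i = a (m + i - 1)" using i by (simp add: b_def Sle)
  qed
  have bt: "b (t+1) = hf \<alpha> \<beta> n a w w" by (simp add: b_def S_def)
  have vDb_all: "\<And>i. i \<in> {1..t+1} \<Longrightarrow> vD \<alpha> \<beta> v (b i) = g (m + i - 1)"
  proof -
    fix i assume i: "i \<in> {1..t+1}"
    show "vD \<alpha> \<beta> v (b i) = g (m + i - 1)"
    proof (cases "i \<le> t")
      case True then show ?thesis using i bsmall by (simp add: g_def)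
    next
      case False then have "i = t + 1" using i by simp
      then show ?thesis using bt vDb by (simp add: p_def)
    qed
  qed
  have mu_ok: "mu_list (map (\<lambda>i. vD \<alpha> \<beta> v (b i)) [1..<t+2]) \<ge> M0"
  proof -
    have e: "map (\<lambda>i. vD \<alpha> \<beta> v (b i)) [1..<t+2] = map (\<lambda>i. g (m + i - 1)) [1..<t+2]"
      by (rule map_cong) (auto simp: vDb_all)
    have mt: "m + t \<le> n" using A(18) A(8) by simp
    show ?thesis unfolding M0_def e by (rule mu_b[OF mono A(7) A(17) mt])
  qed
  have part1: "\<forall>i\<in>{1..t+1}. S i \<in> Vsp n \<and> pure_quat (b i) \<and> b i \<noteq> 0 \<and> hf \<alpha> \<beta> n a (S i) (S i) = b i"
  proof
    fix i assume i: "i \<in> {1..t+1}"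
    show "S i \<in> Vsp n \<and> pure_quat (b i) \<and> b i \<noteq> 0 \<and> hf \<alpha> \<beta> n a (S i) (S i) = b i"
    proof (cases "i \<le> t")
      case True
      have r: "m + i - 1 \<in> {1..n}" using i True A(7,18) by auto
      then show ?thesis using True A(3) bsmall[of i] i by (auto simp: Sle Vsp_def unitv_def b_def)
    next
      case False then have "i = t + 1" using i by simp
      moreover have "w \<in> Vsp n" using mp by (auto simp: Vsp_def w_def)
      ultimately show ?thesis using bt bpure bne by (simp add: St b_def)
    qed
  qed
  have part2: "\<forall>i\<in>{1..t+1}. \<forall>j\<in>{1..t+1}. i \<noteq> j \<longrightarrow> hf \<alpha> \<beta> n a (S i) (S j) = 0"
  proof (intro ballI impI)
    fix i j assume i: "i \<in> {1..t+1}" and j: "j \<in> {1..t+1}" and ij: "i \<noteq> j"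
    have "\<forall>k. S i k = 0 \<or> S j k = 0"
    proof
      fix k
      show "S i k = 0 \<or> S j k = 0"
      proof (cases "i \<le> t")
        case True
        show ?thesis
        proof (cases "j \<le> t")
          case True
          then show ?thesis using \<open>i \<le> t\<close> ij i j by (auto simp: Sle unitv_def)
        next
          case False
          then have "S j = w" using j by (simp add: S_def)
          moreover have "m + i - 1 < p" using True A(7) by (simp add: p_def)
          ultimately show ?thesis using True w_lt[of "m + i - 1"] by (auto simp: Sle unitv_def)
        qed
      next
        case False
        then have "S i = w" by (simp add: S_def)
        moreover have "j \<le> t" using False ij i j by auto
        moreover have "m + j - 1 < p" using \<open>j \<le> t\<close> A(7) by (simp add: p_def)
        ultimately show ?thesis using w_lt[of "m + j - 1"] by (auto simp: Sle unitv_def)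
      qed
    qed
    then show "hf \<alpha> \<beta> n a (S i) (S j) = 0" by (intro hf_zero) blast
  qed
  have part6: "\<forall>i\<in>{1..t+1}. \<exists>c. c \<noteq> 0 \<and> qnorm \<alpha> \<beta> (b i) = qnorm \<alpha> \<beta> (a 1) * c ^ 2"
  proof
    fix i assume i: "i \<in> {1..t+1}"
    show "\<exists>c. c \<noteq> 0 \<and> qnorm \<alpha> \<beta> (b i) = qnorm \<alpha> \<beta> (a 1) * c ^ 2"
    proof (cases "i \<le> t")
      case True
      then have bi: "b i = a (m + i - 1)" using i bsmall by simp
      show ?thesis
      proof (cases "m + i - 1 = 1")
        case True then show ?thesis using bi by (intro exI[of _ 1]) simp
      next
        case False
        then have "m + i - 1 \<in> {2..n}" using i \<open>i \<le> t\<close> A(7,18) by auto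
        then show ?thesis using A(6) bi by simp
      qed
    next
      case False then have "i = t + 1" using i by simp
      then show ?thesis using bt bclass by simp
    qed
  qed

  define G where "G = (\<lambda>(c::nat \<Rightarrow> 'k quat) j. (if m \<le> j \<and> j < p then c (j + 1 - m) else 0) + qmul \<alpha> \<beta> (c (t+1)) (w j))"
  have sumG: "\<And>c. (\<Sum>i\<in>{1..t+1}. vsmul \<alpha> \<beta> (c i) (S i)) = G c"
  proof
    fix c :: "nat \<Rightarrow> 'k quat" and j
    have e0: "(\<Sum>i\<in>{1..t+1}. vsmul \<alpha> \<beta> (c i) (S i)) j = (\<Sum>i\<in>{1..t}. qmul \<alpha> \<beta> (c i) (S i j)) + qmul \<alpha> \<beta> (c (Suc t)) (S (Suc t) j)"
      by (simp add: sum_fun_apply sum.cl_ivl_Suc)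
    have e1: "(\<Sum>i\<in>{1..t}. qmul \<alpha> \<beta> (c i) (S i j)) = (\<Sum>i\<in>{1..t}. if i = j + 1 - m then (if m \<le> j then c i else 0) else 0)"
      by (rule sum.cong) (auto simp: Sle unitv_def)
    have e2: "(\<Sum>i\<in>{1..t}. if i = j + 1 - m then (if m \<le> j then c i else 0) else 0) = (if m \<le> j \<and> j < p then c (j + 1 - m) else 0)"
      by (simp add: sum.delta p_def) (use A(7) in auto)
    show "(\<Sum>i\<in>{1..t+1}. vsmul \<alpha> \<beta> (c i) (S i)) j = G c j"
      unfolding e0 e1 e2 St G_def by simp
  qed
  have latS: "lat \<alpha> \<beta> v S {1..t+1} = {G c |c. \<forall>i\<in>{1..t+1}. c i \<in> OD \<alpha> \<beta> v}"
    unfolding lat_def sumG ..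
  have Gj1: "\<And>c j. j < m \<Longrightarrow> G c j = 0" using mp by (simp add: G_def w_def)
  have Gj2: "\<And>c j. m \<le> j \<Longrightarrow> j < p \<Longrightarrow> G c j = c (j + 1 - m)" by (simp add: G_def w_def)
  have Gj3: "\<And>c. G c p = c (t+1)" using mp by (simp add: G_def w_def)
  have Gj4: "\<And>c j. p < j \<Longrightarrow> j \<le> n \<Longrightarrow> G c j = qmul \<alpha> \<beta> (c (t+1)) (mu j)" by (simp add: G_def w_def)
  have Gj5: "\<And>c j. n < j \<Longrightarrow> G c j = 0" using mp by (simp add: G_def w_def)
  define \<Lambda> where "\<Lambda> = lat \<alpha> \<beta> v unitv {1..n}"
  define W where "W = {x. x \<in> Vsp n \<and> (\<forall>j<m. x j = 0) \<and> (\<forall>l. p < l \<and> l \<le> n \<longrightarrow> x l = qmul \<alpha> \<beta> (x p) (mu l))}"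
  have muOD': "\<And>l. p < l \<Longrightarrow> l \<le> n \<Longrightarrow> mu l \<in> OD \<alpha> \<beta> v" using muOD by (simp add: OD_iff)
  have latSW: "lat \<alpha> \<beta> v S {1..t+1} = \<Lambda> \<inter> W"
  proof
    show "lat \<alpha> \<beta> v S {1..t+1} \<subseteq> \<Lambda> \<inter> W"
    proof
      fix x assume "x \<in> lat \<alpha> \<beta> v S {1..t+1}"
      then obtain c where c: "\<forall>i\<in>{1..t+1}. c i \<in> OD \<alpha> \<beta> v" and x: "x = G c" unfolding latS by blast
      have V: "x \<in> Vsp n"
      proof -
        have "x j = 0" if "j \<notin> {1..n}" for j
        proof (cases "j = 0")
          case True then show ?thesis using x Gj1 A(7) by simp
        next
          case False then show ?thesis using that x Gj5 by simp
        qed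
        then show ?thesis by (simp add: Vsp_def)
      qed
      have O: "\<forall>j\<in>{1..n}. x j \<in> OD \<alpha> \<beta> v"
      proof
        fix j assume j: "j \<in> {1..n}"
        have jn: "j \<le> n" using j by simp
        consider "j < m" | "m \<le> j \<and> j < p" | "j = p" | "p < j \<and> j \<le> n" using jn by linarith
        then show "x j \<in> OD \<alpha> \<beta> v"
        proof cases
          case 1 then show ?thesis using x Gj1 by (simp add: OD_iff)
        next
          case 2 then have "j + 1 - m \<in> {1..t+1}" by (auto simp: p_def)
          then show ?thesis using x Gj2 2 c by simp
        next
          case 3 then show ?thesis using x Gj3 c by simp
        next
          case 4 then show ?thesis using x Gj4 c OD_mul muOD' by simp
        qed
      qed
      have "x \<in> W" unfolding W_def using V x Gj1 Gj3 Gj4 by simp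
      moreover have "x \<in> \<Lambda>" unfolding \<Lambda>_def lat_unit_iff using V O by simp
      ultimately show "x \<in> \<Lambda> \<inter> W" by simp
    qed
  next
    show "\<Lambda> \<inter> W \<subseteq> lat \<alpha> \<beta> v S {1..t+1}"
    proof
      fix x assume xs: "x \<in> \<Lambda> \<inter> W"
      then have "x \<in> \<Lambda>" by simp
      then have "x \<in> Vsp n \<and> (\<forall>j\<in>{1..n}. x j \<in> OD \<alpha> \<beta> v)" unfolding \<Lambda>_def lat_unit_iff .
      then have xV: "x \<in> Vsp n" and xO: "\<forall>j\<in>{1..n}. x j \<in> OD \<alpha> \<beta> v" by auto
      have xW: "\<forall>j<m. x j = 0" "\<forall>l. p < l \<and> l \<le> n \<longrightarrow> x l = qmul \<alpha> \<beta> (x p) (mu l)"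
        using xs unfolding W_def by auto
      define c where "c = (\<lambda>i. x (m + i - 1))"
      have cO: "\<forall>i\<in>{1..t+1}. c i \<in> OD \<alpha> \<beta> v"
      proof
        fix i assume "i \<in> {1..t+1}"
        then have "m + i - 1 \<in> {1..n}" using A(7) mp by (auto simp: p_def)
        then show "c i \<in> OD \<alpha> \<beta> v" using xO by (simp add: c_def)
      qed
      have "G c = x"
      proof
        fix j
        consider "j < m" | "m \<le> j \<and> j < p" | "j = p" | "p < j \<and> j \<le> n" | "n < j" by linarith
        then show "G c j = x j"
        proof cases
          case 1 then show ?thesis using Gj1 xW by simp
        next
          case 2 then show ?thesis using Gj2[of j c] by (simp add: c_def)
        next
          case 3 then show ?thesis using Gj3[of c] by (simp add: c_def p_def)
        next
          case 4 then show ?thesis using Gj4[of j c] xW Gj3[of c] by (simp add: c_def p_def)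
        next
          case 5 then show ?thesis using Gj5 xV by (simp add: Vsp_def)
        qed
      qed
      then show "x \<in> lat \<alpha> \<beta> v S {1..t+1}" unfolding latS using cO by blast
    qed
  qed

  have Wdiff: "\<And>x y. x \<in> W \<Longrightarrow> y \<in> W \<Longrightarrow> x - y \<in> W"
    unfolding W_def by (auto simp: Vsp_def qmul_diff_left)
  have Wadd: "\<And>x y. x \<in> W \<Longrightarrow> y \<in> W \<Longrightarrow> x + y \<in> W"
    unfolding W_def by (auto simp: Vsp_def qmul_add_left)
  have Wsmul: "\<And>x d. x \<in> W \<Longrightarrow> vsmul \<alpha> \<beta> d x \<in> W"
    unfolding W_def by (auto simp: Vsp_def qmul_assoc)
  have scoord: "\<And>j. s j = qmul \<alpha> \<beta> (qk 1 - r) (unitv m j) - (if j \<in> {m+1..n} then lam j else 0)"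
    using A(11) by (simp add: unit_sum)
  have sW: "s \<in> W"
  proof -
    have "s \<in> Vsp n" using A(7,8) by (auto simp: Vsp_def scoord unitv_def)
    moreover have "\<forall>j<m. s j = 0" by (auto simp: scoord unitv_def)
    moreover have "\<forall>l. p < l \<and> l \<le> n \<longrightarrow> s l = qmul \<alpha> \<beta> (s p) (mu l)"
    proof (intro allI impI)
      fix l assume l: "p < l \<and> l \<le> n"
      have sl: "s l = - lam l" using l mp by (simp add: scoord unitv_def)
      have sp: "s p = - lam p" using mp by (simp add: scoord unitv_def)
      show "s l = qmul \<alpha> \<beta> (s p) (mu l)"
      proof (cases "lam p = 0")
        case True
        then show ?thesis using lam0[of l] l sl sp by simp
      next
        case False
        then have "qnorm \<alpha> \<beta> (lam p) \<noteq> 0" by simp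
        then show ?thesis using sl sp
          by (simp add: mu_def qmul_minus_left qmul_assoc[symmetric] qmul_inv_right)
      qed
    qed
    ultimately show ?thesis unfolding W_def by blast
  qed
  define \<phi> where "\<phi> = srot \<alpha> \<beta> n a s \<sigma>"
  have phi: "\<And>x. \<phi> x = x - vsmul \<alpha> \<beta> (qmul \<alpha> \<beta> (hf \<alpha> \<beta> n a x s) (qinv \<alpha> \<beta> \<sigma>)) s"
    by (simp add: \<phi>_def srot_def)
  have U: "isometry \<alpha> \<beta> n a \<phi>" "\<phi> ` \<Lambda> = \<Lambda>" using A(16) by (simp_all add: Uplus_def \<phi>_def \<Lambda>_def)
  have img: "\<phi> ` (\<Lambda> \<inter> W) = \<Lambda> \<inter> W"
  proof
    show "\<phi> ` (\<Lambda> \<inter> W) \<subseteq> \<Lambda> \<inter> W"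
    proof
      fix y assume "y \<in> \<phi> ` (\<Lambda> \<inter> W)"
      then obtain x where x: "x \<in> \<Lambda>" "x \<in> W" "y = \<phi> x" by blast
      have "y \<in> \<Lambda>" using x U(2) by blast
      moreover have "y \<in> W" unfolding x(3) phi by (intro Wdiff Wsmul x(2) sW)
      ultimately show "y \<in> \<Lambda> \<inter> W" by simp
    qed
  next
    show "\<Lambda> \<inter> W \<subseteq> \<phi> ` (\<Lambda> \<inter> W)"
    proof
      fix y assume y: "y \<in> \<Lambda> \<inter> W"
      then have "y \<in> \<phi> ` \<Lambda>" using U(2) by simp
      then obtain x where x: "x \<in> \<Lambda>" "y = \<phi> x" by blast
      have "x = y + vsmul \<alpha> \<beta> (qmul \<alpha> \<beta> (hf \<alpha> \<beta> n a x s) (qinv \<alpha> \<beta> \<sigma>)) s"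
        using x(2) unfolding phi by simp
      then have "x \<in> W" using y by (metis IntD2 Wadd Wsmul sW)
      then show "y \<in> \<phi> ` (\<Lambda> \<inter> W)" using x by blast
    qed
  qed
  have part4: "srot \<alpha> \<beta> n a s \<sigma> \<in> Uplus \<alpha> \<beta> n a (lat \<alpha> \<beta> v S {1..t+1})"
    unfolding Uplus_def latSW using U(1) img by (simp add: \<phi>_def)
  have part3: "lat \<alpha> \<beta> v S {1..t+1} \<subseteq> lat \<alpha> \<beta> v unitv {1..n}"
    unfolding latSW \<Lambda>_def by blast
  have part5: "mu_list (map (\<lambda>i. vD \<alpha> \<beta> v (b i)) [1..<t+2])
       \<ge> mu_list (map (\<lambda>i. vD \<alpha> \<beta> v (a i)) [1..<Suc n])"
    unfolding M0def by (rule mu_ok)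
  show ?thesis
    by (rule exI[of _ S], rule exI[of _ b]) (intro conjI part1 part2 part3 part4 part5 part6)
qed

end
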